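(* Let $\mathcal G=(\mathcal V,\mathcal E)$ be a finite undirected graph with finite label sets $\mathcal X_v$ and costs $\theta$ (unary $\theta_u$, pairwise $\theta_{uv}$). Let $\mathcal A,\mathcal B$ be a partition of $\mathcal G$, and let $\mathcal A'$ be an induced subgraph of $\mathcal G$ such that $\mathcal B$ is boundary complement to $\mathcal A'$ with respect to $\mathcal G$, and suppose $\mathcal V_{\mathcal A}\subseteq\mathcal V_{\mathcal A'}\subseteq\mathrm{SAC}(\theta)$. Let $x'\in\arg\min_{x\in\mathcal X_{\mathcal V_{\mathcal A'}}}E_{\mathcal A'}(\theta,x)$ and $x''\in\arg\min_{x\in\mathcal X_{\mathcal V_{\mathcal B}}}E_{\mathcal B}(\theta,x)$. If $x'_v=x''_v$ for all $v\in\mathcal V_{\partial\mathcal A'}$, then, writing $x'_{\mathcal A}$ for the restriction of $x'$ to $\mathcal V_{\mathcal A}$: $x'_{\mathcal A}\in\arg\min_{x\in\mathcal X_{\mathcal V_{\mathcal A}}}E_{\mathcal A}(\theta,x)$, and for every edge $uv\in\mathcal E$ with $u\in\mathcal V_{\mathcal A}$, $v\in\mathcal V_{\mathcal B}$ it holds that $(x'_u,x''_v)\in\arg\min_{(s,t)\in\mathcal X_u\times\mathcal X_v}\theta_{uv}(s,t)$.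
   Context: For $\mathcal V'\subseteq\mathcal V$, $\mathcal X_{\mathcal V'}=\prod_{v\in\mathcal V'}\mathcal X_v$. A subgraph induced by $\mathcal V'$ contains all edges of $\mathcal G$ between nodes of $\mathcal V'$; a partition $\mathcal A,\mathcal B$ of $\mathcal G$ consists of the subgraphs induced by two disjoint node sets covering $\mathcal V$. For a subgraph $\mathcal H$, $E_{\mathcal H}(\theta,x)=\sum_{u\in\mathcal V_{\mathcal H}}\theta_u(x_u)+\sum_{uv\in\mathcal E_{\mathcal H}}\theta_{uv}(x_u,x_v)$. For an induced subgraph $\mathcal A'$, $\mathcal V_{\partial\mathcal A'}=\{v\in\mathcal V_{\mathcal A'}\mid\exists uv\in\mathcal E: u\in\mathcal V\setminus\mathcal V_{\mathcal A'}\}$, and a subgraph is boundary complement to $\mathcal A'$ w.r.t. $\mathcal G$ if it is the subgraph induced by $(\mathcal V\setminus\mathcal V_{\mathcal A'})\cup\mathcal V_{\partial\mathcal A'}$. A node $u$ is strictly arc-consistent w.r.t. $\theta$ if there exist a label $x_u\in\mathcal X_u$ and labels $x_v\in\mathcal X_v$ for all neighbours $v$ of $u$ such that $\theta_u(x_u)<\theta_u(s)$ for all $s\ne x_u$ and $\theta_{uv}(x_u,x_v)<\theta_{uv}(s,t)$ for all $(s,t)\ne(x_u,x_v)$; $\mathrm{SAC}(\theta)$ denotes the set of strictly arc-consistent nodes. *)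

theory Defs
  imports Complex_Main
begin

text \<open>The undirected edge set is represented by a set
  E of ordered pairs, each undirected edge uv being stored exactly once (in one orientation);
  the pairwise cost of the stored orientation is thp u v s t, and the cost seen from the other
  endpoint is obtained by transposition (theta_uv(s,t) = theta_vu(t,s)).\<close>

definition graph_wf :: "'v set \<Rightarrow> ('v \<times> 'v) set \<Rightarrow> bool" where
  "graph_wf V E \<longleftrightarrow> finite V \<and> E \<subseteq> V \<times> V \<and> (\<forall>u. (u,u) \<notin> E)
     \<and> (\<forall>u v. (u,v) \<in> E \<longrightarrow> (v,u) \<notin> E)"

definition adj :: "('v \<times> 'v) set \<Rightarrow> 'v \<Rightarrow> 'v \<Rightarrow> bool" where
  "adj E u v \<longleftrightarrow> (u,v) \<in> E \<or> (v,u) \<in> E"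

definition theta_e :: "('v \<times> 'v) set \<Rightarrow> ('v \<Rightarrow> 'v \<Rightarrow> 'l \<Rightarrow> 'l \<Rightarrow> real) \<Rightarrow> 'v \<Rightarrow> 'v \<Rightarrow> 'l \<Rightarrow> 'l \<Rightarrow> real" where
  "theta_e E thp u v s t = (if (u,v) \<in> E then thp u v s t else thp v u t s)"

definition induced_edges :: "('v \<times> 'v) set \<Rightarrow> 'v set \<Rightarrow> ('v \<times> 'v) set" where
  "induced_edges E S = E \<inter> (S \<times> S)"

definition energy :: "('v \<times> 'v) set \<Rightarrow> ('v \<Rightarrow> 'l \<Rightarrow> real) \<Rightarrow> ('v \<Rightarrow> 'v \<Rightarrow> 'l \<Rightarrow> 'l \<Rightarrow> real)
     \<Rightarrow> 'v set \<Rightarrow> ('v \<Rightarrow> 'l) \<Rightarrow> real" where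
  "energy E thu thp S x = (\<Sum>u\<in>S. thu u (x u)) + (\<Sum>(u,v)\<in>induced_edges E S. thp u v (x u) (x v))"

text \<open>Labelings of node set S, i.e. elements of X_S (values outside S are irrelevant).\<close>
definition labeling :: "('v \<Rightarrow> 'l set) \<Rightarrow> 'v set \<Rightarrow> ('v \<Rightarrow> 'l) \<Rightarrow> bool" where
  "labeling X S x \<longleftrightarrow> (\<forall>v\<in>S. x v \<in> X v)"

definition is_argmin_energy :: "('v \<times> 'v) set \<Rightarrow> ('v \<Rightarrow> 'l set) \<Rightarrow> ('v \<Rightarrow> 'l \<Rightarrow> real)
     \<Rightarrow> ('v \<Rightarrow> 'v \<Rightarrow> 'l \<Rightarrow> 'l \<Rightarrow> real) \<Rightarrow> 'v set \<Rightarrow> ('v \<Rightarrow> 'l) \<Rightarrow> bool" where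
  "is_argmin_energy E X thu thp S x \<longleftrightarrow> labeling X S x \<and>
     (\<forall>y. labeling X S y \<longrightarrow> energy E thu thp S x \<le> energy E thu thp S y)"

definition boundary :: "'v set \<Rightarrow> ('v \<times> 'v) set \<Rightarrow> 'v set \<Rightarrow> 'v set" where
  "boundary V E A' = {v \<in> A'. \<exists>u \<in> V - A'. adj E u v}"

definition boundary_complement :: "'v set \<Rightarrow> ('v \<times> 'v) set \<Rightarrow> 'v set \<Rightarrow> 'v set" where
  "boundary_complement V E A' = (V - A') \<union> boundary V E A'"

definition SAC :: "'v set \<Rightarrow> ('v \<times> 'v) set \<Rightarrow> ('v \<Rightarrow> 'l set) \<Rightarrow> ('v \<Rightarrow> 'l \<Rightarrow> real)
     \<Rightarrow> ('v \<Rightarrow> 'v \<Rightarrow> 'l \<Rightarrow> 'l \<Rightarrow> real) \<Rightarrow> 'v set" where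
  "SAC V E X thu thp = {u \<in> V. \<exists>xu \<in> X u. \<exists>xn.
      (\<forall>v. adj E u v \<longrightarrow> xn v \<in> X v) \<and>
      (\<forall>s \<in> X u. s \<noteq> xu \<longrightarrow> thu u xu < thu u s) \<and>
      (\<forall>v. adj E u v \<longrightarrow> (\<forall>s \<in> X u. \<forall>t \<in> X v. (s,t) \<noteq> (xu, xn v) \<longrightarrow>
          theta_e E thp u v xu (xn v) < theta_e E thp u v s t))}"

end

theory Submission
  imports Defs
begin

lemma theta_e_swap:
  assumes "graph_wf V E" "adj E u v"
  shows "theta_e E thp u v s t = theta_e E thp v u t s"
  using assms unfolding graph_wf_def adj_def theta_e_def by auto

theorem proposition3:
  fixes V :: "'v set" and E :: "('v \<times> 'v) set" and X :: "'v \<Rightarrow> 'l set"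
    and thu :: "'v \<Rightarrow> 'l \<Rightarrow> real" and thp :: "'v \<Rightarrow> 'v \<Rightarrow> 'l \<Rightarrow> 'l \<Rightarrow> real"
    and A B A' :: "'v set" and x' x'' :: "'v \<Rightarrow> 'l"
  assumes G: "graph_wf V E"
    and finX: "\<forall>v\<in>V. finite (X v)"
    and part: "A \<inter> B = {}" "A \<union> B = V"
    and A'V: "A' \<subseteq> V"
    and bc: "B = boundary_complement V E A'"
    and AA': "A \<subseteq> A'"
    and A'SAC: "A' \<subseteq> SAC V E X thu thp"
    and x': "is_argmin_energy E X thu thp A' x'"
    and x'': "is_argmin_energy E X thu thp B x''"
    and agree: "\<forall>v \<in> boundary V E A'. x' v = x'' v"
  shows "is_argmin_energy E X thu thp A x'
    \<and> (\<forall>u \<in> A. \<forall>v \<in> B. adj E u v \<longrightarrow>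
         x' u \<in> X u \<and> x'' v \<in> X v \<and>
         (\<forall>s \<in> X u. \<forall>t \<in> X v. theta_e E thp u v (x' u) (x'' v) \<le> theta_e E thp u v s t))"
proof -
  have "\<forall>u\<in>A'. \<exists>xu xn. xu \<in> X u \<and>
      (\<forall>v. adj E u v \<longrightarrow> xn v \<in> X v) \<and>
      (\<forall>s \<in> X u. s \<noteq> xu \<longrightarrow> thu u xu < thu u s) \<and>
      (\<forall>v. adj E u v \<longrightarrow> (\<forall>s \<in> X u. \<forall>t \<in> X v. (s,t) \<noteq> (xu, xn v) \<longrightarrow>
          theta_e E thp u v xu (xn v) < theta_e E thp u v s t))"
    using A'SAC unfolding SAC_def by blast
  then obtain c n where cn: "\<And>u. u \<in> A' \<Longrightarrow> c u \<in> X u \<and>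
      (\<forall>v. adj E u v \<longrightarrow> n u v \<in> X v) \<and>
      (\<forall>s \<in> X u. s \<noteq> c u \<longrightarrow> thu u (c u) < thu u s) \<and>
      (\<forall>v. adj E u v \<longrightarrow> (\<forall>s \<in> X u. \<forall>t \<in> X v. (s,t) \<noteq> (c u, n u v) \<longrightarrow>
          theta_e E thp u v (c u) (n u v) < theta_e E thp u v s t))"
    by metis
  have adjsym: "\<And>u v. adj E u v \<Longrightarrow> adj E v u" unfolding adj_def by auto
  have nc: "n u v = c v" if "u \<in> A'" "v \<in> A'" "adj E u v" for u v
  proof (rule ccontr)
    assume ne: "n u v \<noteq> c v"
    have vu: "adj E v u" using adjsym that by blast
    have m1: "n v u \<in> X u" using cn[OF that(2)] vu by blast
    have m2: "n u v \<in> X v" using cn[OF that(1)] that by blast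
    have cu: "c u \<in> X u" "c v \<in> X v" using cn that by auto
    have "theta_e E thp u v (c u) (n u v) < theta_e E thp u v (n v u) (c v)"
      using cn[OF that(1)] that m1 cu ne by auto
    moreover have "theta_e E thp v u (c v) (n v u) < theta_e E thp v u (n u v) (c u)"
      using cn[OF that(2)] vu m2 cu ne by auto
    ultimately show False
      using theta_e_swap[OF G that(3)] by (metis less_asym)
  qed
  have edgemin: "theta_e E thp a b (c a) (c b) \<le> theta_e E thp a b s t"
    if "a \<in> A'" "b \<in> A'" "adj E a b" "s \<in> X a" "t \<in> X b" for a b s t
  proof (cases "(s,t) = (c a, c b)")
    case True then show ?thesis by simp
  next
    case False
    have "\<forall>s \<in> X a. \<forall>t \<in> X b. (s,t) \<noteq> (c a, n a b) \<longrightarrow>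
          theta_e E thp a b (c a) (n a b) < theta_e E thp a b s t"
      using cn[OF that(1)] that(3) by blast
    then show ?thesis using False that(4,5) nc[OF that(1-3)] by (metis less_imp_le)
  qed
  have unmin: "thu a (c a) \<le> thu a s" if "a \<in> A'" "s \<in> X a" for a s
    using cn[OF that(1)] that by (cases "s = c a") auto
  have finA': "finite A'" using G A'V unfolding graph_wf_def by (meson finite_subset)
  have finE: "finite (induced_edges E A')"
    using finA' unfolding induced_edges_def by (simp add: finite_subset)
  have lab': "\<And>u. u \<in> A' \<Longrightarrow> x' u \<in> X u" using x' unfolding is_argmin_energy_def labeling_def by auto
  have eqc: "\<forall>u\<in>A'. x' u = c u"
  proof (rule ccontr)
    assume "\<not> ?thesis"
    then obtain u where u: "u \<in> A'" "x' u \<noteq> c u" by blast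
    define y where "y = (\<lambda>w. if w \<in> A' then c w else x' w)"
    have laby: "labeling X A' y" unfolding labeling_def y_def using cn by auto
    have "(\<Sum>w\<in>A'. thu w (y w)) < (\<Sum>w\<in>A'. thu w (x' w))"
    proof (rule sum_strict_mono_ex1[OF finA'])
      show "\<forall>w\<in>A'. thu w (y w) \<le> thu w (x' w)" using unmin lab' by (auto simp: y_def)
      show "\<exists>w\<in>A'. thu w (y w) < thu w (x' w)"
        using u cn[OF u(1)] lab'[OF u(1)] by (auto simp: y_def)
    qed
    moreover have "(\<Sum>(a,b)\<in>induced_edges E A'. thp a b (y a) (y b))
        \<le> (\<Sum>(a,b)\<in>induced_edges E A'. thp a b (x' a) (x' b))"
    proof (rule sum_mono, clarify)
      fix a b assume ab: "(a,b) \<in> induced_edges E A'"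
      hence abE: "(a,b) \<in> E" "a \<in> A'" "b \<in> A'" unfolding induced_edges_def by auto
      hence "adj E a b" unfolding adj_def by auto
      from edgemin[OF abE(2,3) this lab' lab'] abE
      show "thp a b (y a) (y b) \<le> thp a b (x' a) (x' b)"
        by (simp add: y_def theta_e_def)
    qed
    ultimately have "energy E thu thp A' y < energy E thu thp A' x'"
      unfolding energy_def by linarith
    with x' laby show False unfolding is_argmin_energy_def by force
  qed
  have labA: "labeling X A x'" using lab' AA' unfolding labeling_def by auto
  have part1: "is_argmin_energy E X thu thp A x'"
    unfolding is_argmin_energy_def
  proof (intro conjI allI impI labA)
    fix y assume ly: "labeling X A y"
    have "(\<Sum>w\<in>A. thu w (x' w)) \<le> (\<Sum>w\<in>A. thu w (y w))"
      using ly eqc unmin AA' unfolding labeling_def by (intro sum_mono) auto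
    moreover have "(\<Sum>(a,b)\<in>induced_edges E A. thp a b (x' a) (x' b))
        \<le> (\<Sum>(a,b)\<in>induced_edges E A. thp a b (y a) (y b))"
    proof (rule sum_mono, clarify)
      fix a b assume ab: "(a,b) \<in> induced_edges E A"
      hence abE: "(a,b) \<in> E" "a \<in> A'" "b \<in> A'" "a \<in> A" "b \<in> A"
        unfolding induced_edges_def using AA' by auto
      hence "adj E a b" unfolding adj_def by auto
      from edgemin[OF abE(2,3) this, of "y a" "y b"] abE ly eqc
      show "thp a b (x' a) (x' b) \<le> thp a b (y a) (y b)"
        by (simp add: theta_e_def labeling_def)
    qed
    ultimately show "energy E thu thp A x' \<le> energy E thu thp A y"
      unfolding energy_def by linarith
  qed
  have part2: "x' u \<in> X u \<and> x'' v \<in> X v \<and>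
         (\<forall>s \<in> X u. \<forall>t \<in> X v. theta_e E thp u v (x' u) (x'' v) \<le> theta_e E thp u v s t)"
    if u: "u \<in> A" and v: "v \<in> B" and uv: "adj E u v" for u v
  proof -
    have uA': "u \<in> A'" using u AA' by auto
    have vV: "v \<in> V" using part v by auto
    have ub: "u \<notin> boundary V E A'" using u v part bc unfolding boundary_complement_def by auto
    have vA': "v \<in> A'"
    proof (rule ccontr)
      assume "v \<notin> A'"
      hence "u \<in> boundary V E A'" using uA' vV uv adjsym unfolding boundary_def by blast
      with ub show False by blast
    qed
    have vb: "v \<in> boundary V E A'" using v vA' bc unfolding boundary_complement_def by auto
    have xv: "x'' v = c v" using agree vb eqc vA' by auto
    show ?thesis using edgemin[OF uA' vA' uv] eqc uA' vA' xv cn by auto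
  qed
  show ?thesis using part1 part2 by blast
qed

end
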